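(* Let $\mathcal{H}$ be a real Hilbert space, let $A_i:\mathcal{H}\rightrightarrows\mathcal{H}$ be operators for $i=1,\ldots,r$, and let $\beta\in{]0,1[}$. Then \[ \operatorname{zer}\left(\sum_{i=1}^rA_i^{(\beta)}\right)=\beta J_{\frac{1}{r(1-\beta)}\sum_{i=1}^rA_i}(0). \] Therefore, $\operatorname{zer}\left(\sum_{i=1}^rA_i^{(\beta)}\right)\neq\emptyset$ if and only if $0\in\operatorname{ran}\left(\operatorname{Id}+\frac{1}{r(1-\beta)}\sum_{i=1}^rA_i\right)$.
   Context: The resolvent of an operator $T$ is $J_T:=(\operatorname{Id}+T)^{-1}$, i.e. $J_T(x)=\{y:x\in y+T(y)\}$ (a set). The $\beta$-strengthening of $A$ is $A^{(\beta)}(x):=\left(A+(1-\beta)\operatorname{Id}\right)\left(\frac{x}{\beta}\right)$. $\operatorname{zer}T=\{x:0\in T(x)\}$; $\operatorname{ran}$ denotes the range. *)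

theory Defs
  imports "HOL-Analysis.Analysis"
begin

definition op_sum :: "(nat \<Rightarrow> 'a \<Rightarrow> 'a::real_vector set) \<Rightarrow> nat \<Rightarrow> 'a \<Rightarrow> 'a set" where
  "op_sum A r x = {(\<Sum>i=1..r. y i) | y. \<forall>i\<in>{1..r}. y i \<in> A i x}"

definition op_scale :: "real \<Rightarrow> ('a \<Rightarrow> 'a::real_vector set) \<Rightarrow> 'a \<Rightarrow> 'a set" where
  "op_scale c T x = (\<lambda>v. c *\<^sub>R v) ` T x"

definition op_add :: "('a \<Rightarrow> 'a::real_vector set) \<Rightarrow> ('a \<Rightarrow> 'a set) \<Rightarrow> 'a \<Rightarrow> 'a set" where
  "op_add S T x = {u + v | u v. u \<in> S x \<and> v \<in> T x}"

definition op_id :: "'a \<Rightarrow> 'a set" where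
  "op_id x = {x}"

definition resolvent :: "('a \<Rightarrow> 'a::real_vector set) \<Rightarrow> 'a \<Rightarrow> 'a set" where
  "resolvent T x = {y. x \<in> op_add op_id T y}"

definition strengthening :: "real \<Rightarrow> ('a \<Rightarrow> 'a::real_vector set) \<Rightarrow> 'a \<Rightarrow> 'a set" where
  "strengthening \<beta> A x = op_add A (op_scale (1 - \<beta>) op_id) ((1 / \<beta>) *\<^sub>R x)"

definition zer :: "('a \<Rightarrow> 'a::real_vector set) \<Rightarrow> 'a set" where
  "zer T = {x. 0 \<in> T x}"

definition ran :: "('a \<Rightarrow> 'b set) \<Rightarrow> 'b set" where
  "ran T = (\<Union>x. T x)"

end

theory Submission
  imports Defs
begin

lemma sum_str:
  fixes A :: "nat \<Rightarrow> 'a::real_vector \<Rightarrow> 'a set"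
  shows "w \<in> op_sum (\<lambda>i. strengthening \<beta> (A i)) r x \<longleftrightarrow>
    (\<exists>a. (\<forall>i\<in>{1..r}. a i \<in> A i ((1/\<beta>) *\<^sub>R x)) \<and>
       w = (\<Sum>i=1..r. a i) + (real r * ((1-\<beta>)/\<beta>)) *\<^sub>R x)"
proof
  assume "w \<in> op_sum (\<lambda>i. strengthening \<beta> (A i)) r x"
  then obtain y where w: "w = (\<Sum>i=1..r. y i)" and y: "\<forall>i\<in>{1..r}. y i \<in> strengthening \<beta> (A i) x"
    unfolding op_sum_def by auto
  have "\<forall>i\<in>{1..r}. \<exists>a. a \<in> A i ((1/\<beta>) *\<^sub>R x) \<and> y i = a + ((1-\<beta>)/\<beta>) *\<^sub>R x"
    using y unfolding strengthening_def op_add_def op_scale_def op_id_def by auto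
  then obtain a where a: "\<forall>i\<in>{1..r}. a i \<in> A i ((1/\<beta>) *\<^sub>R x) \<and> y i = a i + ((1-\<beta>)/\<beta>) *\<^sub>R x"
    by metis
  have "w = (\<Sum>i=1..r. a i + ((1-\<beta>)/\<beta>) *\<^sub>R x)" using w a by (auto intro: sum.cong)
  also have "\<dots> = (\<Sum>i=1..r. a i) + (real r * ((1-\<beta>)/\<beta>)) *\<^sub>R x"
    by (simp add: sum.distrib scaleR_sum_left[symmetric] sum_constant_scaleR)
  finally show "\<exists>a. (\<forall>i\<in>{1..r}. a i \<in> A i ((1/\<beta>) *\<^sub>R x)) \<and>
       w = (\<Sum>i=1..r. a i) + (real r * ((1-\<beta>)/\<beta>)) *\<^sub>R x" using a by blast
next
  assume "\<exists>a. (\<forall>i\<in>{1..r}. a i \<in> A i ((1/\<beta>) *\<^sub>R x)) \<and>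
       w = (\<Sum>i=1..r. a i) + (real r * ((1-\<beta>)/\<beta>)) *\<^sub>R x"
  then obtain a where a: "\<forall>i\<in>{1..r}. a i \<in> A i ((1/\<beta>) *\<^sub>R x)"
     and w: "w = (\<Sum>i=1..r. a i) + (real r * ((1-\<beta>)/\<beta>)) *\<^sub>R x" by blast
  have "w = (\<Sum>i=1..r. a i + ((1-\<beta>)/\<beta>) *\<^sub>R x)" using w
    by (simp add: sum.distrib sum_constant_scaleR)
  moreover have "\<forall>i\<in>{1..r}. a i + ((1-\<beta>)/\<beta>) *\<^sub>R x \<in> strengthening \<beta> (A i) x"
    using a unfolding strengthening_def op_add_def op_scale_def op_id_def by force
  ultimately show "w \<in> op_sum (\<lambda>i. strengthening \<beta> (A i)) r x"
    unfolding op_sum_def by blast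
qed

lemma res_char:
  fixes S :: "'a::real_vector \<Rightarrow> 'a set"
  shows "y \<in> resolvent (op_scale c S) 0 \<longleftrightarrow> (\<exists>s\<in>S y. y + c *\<^sub>R s = 0)"
  unfolding resolvent_def op_add_def op_scale_def op_id_def by auto

theorem proposition4p5:
  fixes A :: "nat \<Rightarrow> 'a::{real_inner, complete_space} \<Rightarrow> 'a set"
    and r :: nat and \<beta> :: real
  assumes "r \<ge> 1" and "0 < \<beta>" and "\<beta> < 1"
  shows "zer (op_sum (\<lambda>i. strengthening \<beta> (A i)) r)
           = (\<lambda>v. \<beta> *\<^sub>R v) ` resolvent (op_scale (1 / (real r * (1 - \<beta>))) (op_sum A r)) 0
    \<and> (zer (op_sum (\<lambda>i. strengthening \<beta> (A i)) r) \<noteq> {}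
           \<longleftrightarrow> 0 \<in> ran (op_add op_id (op_scale (1 / (real r * (1 - \<beta>))) (op_sum A r))))"
proof -
  define c where "c = 1 / (real r * (1 - \<beta>))"
  have rpos: "real r * (1 - \<beta>) > 0" using assms by simp
  have key: "x \<in> zer (op_sum (\<lambda>i. strengthening \<beta> (A i)) r) \<longleftrightarrow>
     (1/\<beta>) *\<^sub>R x \<in> resolvent (op_scale c (op_sum A r)) 0" for x
  proof -
    let ?y = "(1/\<beta>) *\<^sub>R x"
    have xe: "x = \<beta> *\<^sub>R ?y" using assms by simp
    have e: "(real r * ((1-\<beta>)/\<beta>)) *\<^sub>R x = (real r * (1-\<beta>)) *\<^sub>R ?y"
      using assms by simp
    have "x \<in> zer (op_sum (\<lambda>i. strengthening \<beta> (A i)) r) \<longleftrightarrow>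
      (\<exists>a. (\<forall>i\<in>{1..r}. a i \<in> A i ?y) \<and> 0 = (\<Sum>i=1..r. a i) + (real r * (1-\<beta>)) *\<^sub>R ?y)"
      unfolding zer_def using sum_str[of 0 \<beta> A r x] e by simp
    also have "\<dots> \<longleftrightarrow> (\<exists>s\<in>op_sum A r ?y. ?y + c *\<^sub>R s = 0)"
    proof -
      have "(0 = s + (real r * (1-\<beta>)) *\<^sub>R ?y) \<longleftrightarrow> (?y + c *\<^sub>R s = 0)" for s
      proof -
        have "(0 = s + (real r * (1-\<beta>)) *\<^sub>R ?y) \<longleftrightarrow> (c *\<^sub>R (s + (real r * (1-\<beta>)) *\<^sub>R ?y) = 0)"
        proof -
          have "c \<noteq> 0" using rpos c_def assms by simp
          then show ?thesis by (metis scaleR_eq_0_iff)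
        qed
        also have "c *\<^sub>R (s + (real r * (1-\<beta>)) *\<^sub>R ?y) = c *\<^sub>R s + ?y"
          using rpos c_def assms by (simp add: scaleR_add_right)
        finally show ?thesis by (simp add: add.commute)
      qed
      then show ?thesis unfolding op_sum_def by auto
    qed
    finally show ?thesis using res_char by metis
  qed
  have eq: "zer (op_sum (\<lambda>i. strengthening \<beta> (A i)) r)
           = (\<lambda>v. \<beta> *\<^sub>R v) ` resolvent (op_scale c (op_sum A r)) 0"
  proof (rule set_eqI)
    fix x
    show "x \<in> zer (op_sum (\<lambda>i. strengthening \<beta> (A i)) r) \<longleftrightarrow>
          x \<in> (\<lambda>v. \<beta> *\<^sub>R v) ` resolvent (op_scale c (op_sum A r)) 0"
    proof
      assume "x \<in> zer (op_sum (\<lambda>i. strengthening \<beta> (A i)) r)"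
      then have "(1/\<beta>) *\<^sub>R x \<in> resolvent (op_scale c (op_sum A r)) 0" using key by blast
      moreover have "x = \<beta> *\<^sub>R ((1/\<beta>) *\<^sub>R x)" using assms by simp
      ultimately show "x \<in> (\<lambda>v. \<beta> *\<^sub>R v) ` resolvent (op_scale c (op_sum A r)) 0" by blast
    next
      assume "x \<in> (\<lambda>v. \<beta> *\<^sub>R v) ` resolvent (op_scale c (op_sum A r)) 0"
      then obtain v where v: "v \<in> resolvent (op_scale c (op_sum A r)) 0" "x = \<beta> *\<^sub>R v" by blast
      then have "(1/\<beta>) *\<^sub>R x = v" using assms by simp
      then show "x \<in> zer (op_sum (\<lambda>i. strengthening \<beta> (A i)) r)" using key v by blast
    qed
  qed
  have "resolvent (op_scale c (op_sum A r)) 0 \<noteq> {} \<longleftrightarrow>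
        0 \<in> ran (op_add op_id (op_scale c (op_sum A r)))"
    unfolding resolvent_def ran_def by auto
  then show ?thesis using eq c_def by auto
qed

end
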